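(* Let $Y$ and $Z$ be random variables such that $Y$ has a continuous distribution function and $a(Z-b)$ is integer-valued for some real numbers $a>0$ and $b$. If $\sigma_Z^2:=\operatorname{Var}Z<\infty$, then $$d_{KS}(Y,Z)\ge\frac{1}{12a\sigma_Z+8}.$$
   Context: $d_{KS}(Y,Z):=\sup_{x\in\mathbb R}|P(Y\le x)-P(Z\le x)|$. *)

theory Defs
  imports "HOL-Probability.Probability"
begin

definition cdf_rv :: "'a measure \<Rightarrow> ('a \<Rightarrow> real) \<Rightarrow> real \<Rightarrow> real" where
  "cdf_rv M X x = measure M {\<omega> \<in> space M. X \<omega> \<le> x}"

definition d_KS :: "'a measure \<Rightarrow> ('a \<Rightarrow> real) \<Rightarrow> 'b measure \<Rightarrow> ('b \<Rightarrow> real) \<Rightarrow> real" where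
  "d_KS M Y N Z = (SUP x\<in>(UNIV::real set). \<bar>cdf_rv M Y x - cdf_rv N Z x\<bar>)"

end

theory Submission
  imports Defs
begin

lemma jump_bound:
  fixes M :: "'a measure" and N :: "'b measure"
    and Y :: "'a \<Rightarrow> real" and Z :: "'b \<Rightarrow> real"
  assumes PM: "prob_space M" and PN: "prob_space N"
    and ZM: "Z \<in> borel_measurable N"
    and cont: "continuous_on UNIV (cdf_rv M Y)"
  shows "measure N {\<omega>\<in>space N. Z \<omega> = z} \<le> 2 * d_KS M Y N Z"
proof (rule ccontr)
  interpret M: prob_space M by fact
  interpret N: prob_space N by fact
  define F where "F = cdf_rv M Y"
  define G where "G = cdf_rv N Z"
  define p where "p = measure N {\<omega>\<in>space N. Z \<omega> = z}"
  define d where "d = d_KS M Y N Z"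
  assume "\<not> p \<le> 2 * d_KS M Y N Z"
  hence lt: "2 * d < p" unfolding d_def p_def by simp
  have F01: "0 \<le> F x \<and> F x \<le> 1" for x unfolding F_def cdf_rv_def by simp
  have G01: "0 \<le> G x \<and> G x \<le> 1" for x unfolding G_def cdf_rv_def by simp
  have bdd: "bdd_above (range (\<lambda>x. \<bar>F x - G x\<bar>))"
  proof (rule bdd_aboveI2)
    fix x show "\<bar>F x - G x\<bar> \<le> 1" using F01[of x] G01[of x] by auto
  qed
  have dge: "\<bar>F x - G x\<bar> \<le> d" for x
    unfolding d_def d_KS_def F_def[symmetric] G_def[symmetric]
    by (rule cSUP_upper[OF _ bdd]) simp
  define \<delta> where "\<delta> = p - 2 * d"
  have dpos: "\<delta> > 0" using lt unfolding \<delta>_def by simp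
  have "isCont F z" using cont unfolding F_def
    by (simp add: continuous_on_eq_continuous_at)
  then obtain e where e: "e > 0" "\<And>x. dist x z < e \<Longrightarrow> dist (F x) (F z) < \<delta>"
    using dpos unfolding continuous_at_eps_delta by blast
  define x where "x = z - e / 2"
  have Fx: "\<bar>F x - F z\<bar> < \<delta>" using e(1) e(2)[of x] unfolding x_def dist_real_def by auto
  have xz: "x < z" using e(1) unfolding x_def by simp
  have "{\<omega>\<in>space N. Z \<omega> \<le> x} \<union> {\<omega>\<in>space N. Z \<omega> = z} \<subseteq> {\<omega>\<in>space N. Z \<omega> \<le> z}"
    using xz by auto
  hence "measure N ({\<omega>\<in>space N. Z \<omega> \<le> x} \<union> {\<omega>\<in>space N. Z \<omega> = z}) \<le> G z"
    unfolding G_def cdf_rv_def using ZM by (intro N.finite_measure_mono) measurable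
  moreover have "measure N ({\<omega>\<in>space N. Z \<omega> \<le> x} \<union> {\<omega>\<in>space N. Z \<omega> = z}) = G x + p"
    unfolding G_def cdf_rv_def p_def using ZM xz
    by (intro N.finite_measure_Union) (measurable, auto)
  ultimately have "p \<le> G z - G x" by simp
  also have "\<dots> \<le> \<bar>G z - F z\<bar> + \<bar>F z - F x\<bar> + \<bar>F x - G x\<bar>" by simp
  also have "\<dots> < d + \<delta> + d" using dge[of z] dge[of x] Fx by (simp add: abs_minus_commute)
  finally show False unfolding \<delta>_def by simp
qed

lemma atom_bound:
  fixes N :: "'b measure" and Z :: "'b \<Rightarrow> real" and a b :: real
  assumes PN: "prob_space N"
    and ZM: "Z \<in> borel_measurable N"
    and apos: "a > 0"
    and lat: "AE \<omega> in N. a * (Z \<omega> - b) \<in> \<int>"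
    and sq: "integrable N (\<lambda>\<omega>. (Z \<omega>)\<^sup>2)"
  shows "\<exists>z. measure N {\<omega>\<in>space N. Z \<omega> = z} \<ge> 3 / (4 * (4 * a * sqrt (prob_space.variance N Z) + 2))"
proof -
  interpret N: prob_space N by fact
  define \<mu> where "\<mu> = N.expectation Z"
  define v where "v = N.variance Z"
  define \<sigma> where "\<sigma> = sqrt v"
  have v0: "v \<ge> 0" unfolding v_def by (intro integral_nonneg_AE) simp
  have sig0: "\<sigma> \<ge> 0" unfolding \<sigma>_def using v0 by simp
  have sigsq: "\<sigma>\<^sup>2 = v" unfolding \<sigma>_def using v0 by simp
  define t where "t = 2 * \<sigma> + 1 / (2 * a)"
  have tpos: "t > 0" unfolding t_def using sig0 apos by (simp add: add_nonneg_pos)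
  have t2: "t \<ge> 2 * \<sigma>" unfolding t_def using apos by simp
  have cheb: "N.prob {x\<in>space N. \<bar>Z x - \<mu>\<bar> \<ge> t} \<le> v / t\<^sup>2"
    unfolding \<mu>_def v_def using N.Chebyshev_inequality[OF ZM _ tpos] sq by simp
  have "4 * v \<le> t\<^sup>2"
  proof -
    have "(2*\<sigma>)\<^sup>2 \<le> t\<^sup>2" using t2 sig0 by (intro power_mono) auto
    thus ?thesis using sigsq by (simp add: power_mult_distrib)
  qed
  hence "v / t\<^sup>2 \<le> 1/4" using tpos by (simp add: divide_simps)
  with cheb have c1: "N.prob {x\<in>space N. \<bar>Z x - \<mu>\<bar> \<ge> t} \<le> 1/4" by linarith
  define A where "A = {x\<in>space N. \<bar>Z x - \<mu>\<bar> < t}"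
  have Aev: "A \<in> sets N" unfolding A_def using ZM by measurable
  have "N.prob A = 1 - N.prob {x\<in>space N. \<bar>Z x - \<mu>\<bar> \<ge> t}"
  proof -
    have "A = space N - {x\<in>space N. \<bar>Z x - \<mu>\<bar> \<ge> t}" unfolding A_def by auto
    thus ?thesis using N.prob_compl[of "{x\<in>space N. \<bar>Z x - \<mu>\<bar> \<ge> t}"] ZM by (simp; measurable)
  qed
  with c1 have PA: "N.prob A \<ge> 3/4" by simp
  define L where "L = a * (\<mu> - b - t)"
  define U where "U = a * (\<mu> - b + t)"
  define K where "K = {k::int. L < k \<and> k < U}"
  have Ksub: "K \<subseteq> {\<lfloor>L\<rfloor>+1 .. \<lceil>U\<rceil>-1}"
  proof
    fix k assume "k \<in> K"
    hence "L < k" "k < U" unfolding K_def by auto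
    hence "\<lfloor>L\<rfloor> < k" "k < \<lceil>U\<rceil>" by linarith+
    thus "k \<in> {\<lfloor>L\<rfloor>+1 .. \<lceil>U\<rceil>-1}" by auto
  qed
  have finK: "finite K" using Ksub finite_subset by blast
  have cardK: "real (card K) < 4 * a * \<sigma> + 2"
  proof -
    have "card K \<le> card {\<lfloor>L\<rfloor>+1 .. \<lceil>U\<rceil>-1}" using Ksub by (intro card_mono) auto
    also have "\<dots> = nat (\<lceil>U\<rceil> - \<lfloor>L\<rfloor> - 1)" by simp
    finally have "real (card K) \<le> real (nat (\<lceil>U\<rceil> - \<lfloor>L\<rfloor> - 1))" by simp
    moreover have "real (nat (\<lceil>U\<rceil> - \<lfloor>L\<rfloor> - 1)) < 4 * a * \<sigma> + 2"
    proof -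
      have f1: "real_of_int \<lceil>U\<rceil> < U + 1" by linarith
      have f2: "real_of_int \<lfloor>L\<rfloor> > L - 1" by linarith
      have f3: "U - L = 2 * a * t" unfolding U_def L_def by (simp add: algebra_simps)
      have f4: "2 * a * t = 4 * a * \<sigma> + 1" unfolding t_def using apos by (simp add: field_simps)
      have f5: "4 * a * \<sigma> \<ge> 0" using apos sig0 by simp
      have h1: "real_of_int (\<lceil>U\<rceil> - \<lfloor>L\<rfloor> - 1) < 4 * a * \<sigma> + 2"
      proof -
        have "real_of_int (\<lceil>U\<rceil> - \<lfloor>L\<rfloor> - 1) = real_of_int \<lceil>U\<rceil> - real_of_int \<lfloor>L\<rfloor> - 1" by simp
        thus ?thesis using f1 f2 f3 f4 by linarith
      qed
      have h2: "0 < 4 * a * \<sigma> + 2" using f5 by linarith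
      note h = h1 h2
      show ?thesis
      proof (cases "\<lceil>U\<rceil> - \<lfloor>L\<rfloor> - 1 \<ge> 0")
        case True thus ?thesis using h(1) by simp
      next
        case False thus ?thesis using h(2) by simp
      qed
    qed
    ultimately show ?thesis by linarith
  qed
  define B where "B = (\<lambda>k::int. {\<omega>\<in>space N. Z \<omega> = b + k / a})"
  have Bev: "B k \<in> sets N" for k unfolding B_def using ZM by measurable
  have "AE \<omega> in N. \<omega> \<in> A \<longrightarrow> \<omega> \<in> (\<Union>k\<in>K. B k)"
    using lat
  proof (rule AE_mp, intro AE_I2 impI)
    fix \<omega> assume w: "\<omega> \<in> space N" "a * (Z \<omega> - b) \<in> \<int>" "\<omega> \<in> A"
    then obtain k where k: "a * (Z \<omega> - b) = of_int k" by (auto elim: Ints_cases)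
    hence Zk: "Z \<omega> = b + k / a" using apos by (simp add: field_simps)
    have "\<bar>Z \<omega> - \<mu>\<bar> < t" using w unfolding A_def by simp
    hence r: "\<mu> - b - t < Z \<omega> - b" "Z \<omega> - b < \<mu> - b + t" by (auto simp: abs_less_iff)
    have "L < k \<and> k < U" unfolding L_def U_def k[symmetric]
      using mult_strict_left_mono[OF r(1) apos] mult_strict_left_mono[OF r(2) apos] by simp
    hence "k \<in> K" unfolding K_def by simp
    thus "\<omega> \<in> (\<Union>k\<in>K. B k)" using Zk w unfolding B_def by auto
  qed
  hence "N.prob A \<le> N.prob (\<Union>k\<in>K. B k)"
    by (rule N.finite_measure_mono_AE) (use finK Bev in auto)
  also have "\<dots> \<le> (\<Sum>k\<in>K. N.prob (B k))"
    using finK Bev by (intro N.finite_measure_subadditive_finite) auto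
  finally have sumK: "(\<Sum>k\<in>K. N.prob (B k)) \<ge> 3/4" using PA by simp
  have Kne: "K \<noteq> {}" using sumK by auto
  have "\<exists>k\<in>K. N.prob (B k) \<ge> 3 / (4 * real (card K))"
  proof (rule ccontr)
    assume "\<not> ?thesis"
    hence "\<forall>k\<in>K. N.prob (B k) < 3 / (4 * real (card K))" by auto
    hence "(\<Sum>k\<in>K. N.prob (B k)) < (\<Sum>k\<in>K. 3 / (4 * real (card K)))"
      using finK Kne by (intro sum_strict_mono) auto
    also have "\<dots> = 3/4" using finK Kne by simp
    finally show False using sumK by simp
  qed
  then obtain k where k: "N.prob (B k) \<ge> 3 / (4 * real (card K))" by blast
  have cpos: "real (card K) > 0" using finK Kne by (simp add: card_gt_0_iff)
  have "3 / (4 * (4 * a * \<sigma> + 2)) \<le> 3 / (4 * real (card K))"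
    using cardK cpos by (intro divide_left_mono) auto
  with k have "3 / (4 * (4 * a * \<sigma> + 2)) \<le> N.prob (B k)" by linarith
  thus ?thesis unfolding B_def \<sigma>_def v_def by blast
qed

theorem lemma5p5:
  fixes M :: "'a measure" and N :: "'b measure"
    and Y :: "'a \<Rightarrow> real" and Z :: "'b \<Rightarrow> real" and a b :: real
  assumes "prob_space M" and "prob_space N"
    and "Y \<in> borel_measurable M" and "Z \<in> borel_measurable N"
    and "continuous_on UNIV (cdf_rv M Y)"
    and "a > 0"
    and "AE \<omega> in N. a * (Z \<omega> - b) \<in> \<int>"
    and "integrable N (\<lambda>\<omega>. (Z \<omega>)\<^sup>2)"
  shows "d_KS M Y N Z \<ge> 1 / (12 * a * sqrt (prob_space.variance N Z) + 8)"
proof -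
  define s where "s = sqrt (prob_space.variance N Z)"
  have s0: "s \<ge> 0" unfolding s_def by (simp add: integral_nonneg_AE)
  obtain z where z: "measure N {\<omega>\<in>space N. Z \<omega> = z} \<ge> 3 / (4 * (4 * a * s + 2))"
    using atom_bound[OF assms(2) assms(4) assms(6) assms(7) assms(8)] unfolding s_def by blast
  have j: "measure N {\<omega>\<in>space N. Z \<omega> = z} \<le> 2 * d_KS M Y N Z"
    by (rule jump_bound[OF assms(1,2,4,5)])
  have as0: "a * s \<ge> 0" using s0 assms(6) by simp
  have "1 / (12 * a * s + 8) \<le> 3 / (8 * (4 * a * s + 2))"
    using as0 by (simp add: divide_simps)
  also have "\<dots> = (3 / (4 * (4 * a * s + 2))) / 2" by simp
  also have "\<dots> \<le> d_KS M Y N Z"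
  proof -
    define q where "q = 3 / (4 * (4 * a * s + 2))"
    have "q \<le> 2 * d_KS M Y N Z" using z j unfolding q_def by linarith
    thus ?thesis unfolding q_def[symmetric] by linarith
  qed
  finally show ?thesis unfolding s_def .
qed

end
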